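(* Let $\Sigma$ be a non-empty finite or countably infinite alphabet and $\mu$ a probability map over $\Sigma$. If there exists a $\mu$-distributed sequence $\alpha\in\Sigma^\omega$, then $\mu$ is invariant, i.e. for every $w\in\Sigma^*$, $\sum_{a\in\Sigma}\mu(wa)=\mu(w)$ and $\sum_{a\in\Sigma}\mu(aw)=\mu(w)$.
   Context: A probability map over $\Sigma$ is $\mu:\Sigma^+\to[0,1]$ with $\sum_{w\in\Sigma^n}\mu(w)=1$ for every $n\ge1$, with the convention $\mu(\lambda)=1$ for the empty word $\lambda$. $\alpha$ is $\mu$-distributed if for every $w\in\Sigma^+$, $\lim_{N\to\infty}\#_w(\alpha|_{\le N})/N=\mu(w)$, where $\alpha|_{\le N}$ is the length-$N$ prefix and $\#_w(v)$ counts (possibly overlapping) occurrences of $w$ as a contiguous block in $v$. *)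

theory Defs
  imports "HOL-Analysis.Analysis" "HOL-Library.Countable"
begin

definition prob_map :: "('a list \<Rightarrow> real) \<Rightarrow> bool" where
  "prob_map \<mu> \<longleftrightarrow>
     \<mu> [] = 1 \<and>
     (\<forall>w. w \<noteq> [] \<longrightarrow> 0 \<le> \<mu> w \<and> \<mu> w \<le> 1) \<and>
     (\<forall>n\<ge>1. (\<mu> has_sum 1) {w. length w = n})"

definition occ :: "'a list \<Rightarrow> 'a list \<Rightarrow> nat" where
  "occ w v = card {i. i + length w \<le> length v \<and> take (length w) (drop i v) = w}"

definition prefix_of :: "(nat \<Rightarrow> 'a) \<Rightarrow> nat \<Rightarrow> 'a list" where
  "prefix_of \<alpha> N = map \<alpha> [0..<N]"

definition mu_distributed :: "('a list \<Rightarrow> real) \<Rightarrow> (nat \<Rightarrow> 'a) \<Rightarrow> bool" where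
  "mu_distributed \<mu> \<alpha> \<longleftrightarrow>
     (\<forall>w. w \<noteq> [] \<longrightarrow>
        (\<lambda>N. real (occ w (prefix_of \<alpha> N)) / real N) \<longlonglongrightarrow> \<mu> w)"

end

theory Submission
  imports Defs
begin


lemma global_eq:
  fixes f :: "'w \<Rightarrow> 'a \<Rightarrow> real" and g :: "'w \<Rightarrow> real"
  assumes g1: "(g has_sum 1) A"
    and f1: "((\<lambda>(x,a). f x a) has_sum 1) (A \<times> UNIV)"
    and nn: "\<And>x a. 0 \<le> f x a"
    and bd: "\<And>x F. x \<in> A \<Longrightarrow> finite F \<Longrightarrow> sum (f x) F \<le> g x"
    and x: "x \<in> A"
  shows "(f x has_sum g x) UNIV"
proof -
  have sx: "f y summable_on UNIV" if "y \<in> A" for y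
    using summable_on_SigmaD1[of f A "\<lambda>_. UNIV" y] f1 that unfolding summable_on_def by auto
  define h where "h y = infsum (f y) UNIV" for y
  have hs: "(f y has_sum h y) UNIV" if "y \<in> A" for y
    using sx[OF that] h_def by auto
  have hle: "h y \<le> g y" if "y \<in> A" for y
    unfolding h_def by (rule infsum_le_finite_sums[OF sx[OF that]]) (use bd that in auto)
  have h1: "(h has_sum 1) A"
    by (rule has_sum_SigmaD[OF f1[unfolded case_prod_unfold]]) (use hs in auto)
  have "((\<lambda>y. g y - h y) has_sum (1 - 1)) A"
    using has_sum_add[OF g1 has_sum_uminusI[OF h1]] by simp
  hence "g x - h x = 0"
    by (rule nonneg_has_sum_le_0D) (use hle x in auto)
  thus ?thesis using hs[OF x] by simp
qed


lemma occ_snoc_le: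
  assumes "finite F"
  shows "(\<Sum>a\<in>F. occ (w@[a]) v) \<le> occ w v"
proof -
  define S where "S a = {i. i + length (w@[a]) \<le> length v \<and> take (length (w@[a])) (drop i v) = w@[a]}" for a
  define T where "T = {i. i + length w \<le> length v \<and> take (length w) (drop i v) = w}"
  have fT: "finite T" unfolding T_def by (rule finite_subset[of _ "{..length v}"]) auto
  have key: "i \<in> S a \<longleftrightarrow> i \<in> T \<and> i + length w < length v \<and> v ! (i + length w) = a" for i a
  proof -
    have "take (Suc (length w)) (drop i v) = take (length w) (drop i v) @ [v ! (i + length w)]"
      if "i + length w < length v" using that
      by (simp add: take_Suc_conv_app_nth add.commute)
    thus ?thesis unfolding S_def T_def by auto
  qed
  have sub: "S a \<subseteq> T" for a using key by auto
  have "(\<Sum>a\<in>F. occ (w@[a]) v) = (\<Sum>a\<in>F. card (S a))" unfolding occ_def S_def by simp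
  also have "\<dots> = card (\<Union>a\<in>F. S a)"
    by (rule card_UN_disjoint[symmetric]) (use assms fT sub key in \<open>auto intro: finite_subset\<close>)
  also have "\<dots> \<le> card T" by (rule card_mono[OF fT]) (use sub in auto)
  finally show ?thesis unfolding occ_def T_def .
qed

lemma occ_cons_le:
  assumes "finite F"
  shows "(\<Sum>a\<in>F. occ (a#w) v) \<le> occ w v"
proof -
  define S where "S a = {i. i + length (a#w) \<le> length v \<and> take (length (a#w)) (drop i v) = a#w}" for a
  define T where "T = {i. i + length w \<le> length v \<and> take (length w) (drop i v) = w}"
  have fT: "finite T" unfolding T_def by (rule finite_subset[of _ "{..length v}"]) auto
  have key: "i \<in> S a \<longleftrightarrow> Suc i \<in> T \<and> v ! i = a" for i a
  proof -
    have "drop i v = v ! i # drop (Suc i) v" if "i < length v" using that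
      by (simp add: Cons_nth_drop_Suc)
    thus ?thesis unfolding S_def T_def by (cases "i < length v") auto
  qed
  have fS: "finite (S a)" for a unfolding S_def by (rule finite_subset[of _ "{..length v}"]) auto
  have "(\<Sum>a\<in>F. occ (a#w) v) = (\<Sum>a\<in>F. card (S a))" unfolding occ_def S_def by simp
  also have "\<dots> = card (\<Union>a\<in>F. S a)"
    by (rule card_UN_disjoint[symmetric]) (use assms fS key in auto)
  also have "\<dots> = card (Suc ` (\<Union>a\<in>F. S a))" by (simp add: card_image)
  also have "\<dots> \<le> card T" by (rule card_mono[OF fT]) (use key in auto)
  finally show ?thesis unfolding occ_def T_def .
qed

lemma bij_snoc: "bij_betw (\<lambda>(w,a). w @ [a]) ({w. length w = n} \<times> UNIV) {v. length v = Suc n}"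
proof (rule bij_betwI')
  fix v :: "'a list" assume "v \<in> {v. length v = Suc n}"
  hence "v = butlast v @ [last v]" "length (butlast v) = n"
    by (auto intro!: append_butlast_last_id[symmetric])
  thus "\<exists>x\<in>{w. length w = n} \<times> UNIV. v = (case x of (w, a) \<Rightarrow> w @ [a])"
    by (intro bexI[of _ "(butlast v, last v)"]) auto
qed auto

lemma bij_cons: "bij_betw (\<lambda>(w,a). a # w) ({w. length w = n} \<times> UNIV) {v. length v = Suc n}"
proof (rule bij_betwI')
  fix v :: "'a list" assume "v \<in> {v. length v = Suc n}"
  hence "v = hd v # tl v" "length (tl v) = n"
    by (cases v; auto)+
  thus "\<exists>x\<in>{w. length w = n} \<times> UNIV. v = (case x of (w, a) \<Rightarrow> a # w)"
    by (intro bexI[of _ "(tl v, hd v)"]) auto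
qed auto

theorem proposition2p2:
  fixes \<mu> :: "('a::countable) list \<Rightarrow> real"
  assumes "prob_map \<mu>"
    and "\<exists>\<alpha>. mu_distributed \<mu> \<alpha>"
  shows "\<forall>w. ((\<lambda>a. \<mu> (w @ [a])) has_sum \<mu> w) UNIV \<and>
             ((\<lambda>a. \<mu> (a # w)) has_sum \<mu> w) UNIV"
proof
  fix w0 :: "'a list"
  obtain \<alpha> where md: "mu_distributed \<mu> \<alpha>" using assms(2) by blast
  have mu0: "\<mu> [] = 1" and nn: "\<And>w. w \<noteq> [] \<Longrightarrow> 0 \<le> \<mu> w"
    and hs: "\<And>n. n \<ge> 1 \<Longrightarrow> (\<mu> has_sum 1) {w. length w = n}"
    using assms(1) unfolding prob_map_def by auto
  have lim: "(\<lambda>N. real (occ w (prefix_of \<alpha> N)) / real N) \<longlonglongrightarrow> \<mu> w" if "w \<noteq> []" for w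
    using md that unfolding mu_distributed_def by auto
  have hsn: "(\<mu> has_sum 1) {w. length w = n}" for n
  proof (cases "n = 0")
    case True
    have "{w::'a list. length w = n} = {[]}" using True by auto
    thus ?thesis using mu0 has_sum_finite[of "{[]}" \<mu>] by simp
  qed (use hs in auto)
  have single: "(\<Sum>a\<in>F. \<mu> [a]) \<le> 1" if "finite F" for F :: "'a set"
  proof -
    have "(\<Sum>a\<in>F. \<mu> [a]) = sum \<mu> ((\<lambda>a. [a]) ` F)" by (simp add: sum.reindex inj_on_def)
    also have "\<dots> \<le> 1"
      by (rule finite_sum_le_has_sum[OF hs[of 1]]) (use that nn in \<open>auto intro!: nn\<close>)
    finally show ?thesis .
  qed
  have bd_snoc: "(\<Sum>a\<in>F. \<mu> (w @ [a])) \<le> \<mu> w" if "finite F" for w F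
  proof (cases "w = []")
    case True thus ?thesis using single[OF that] mu0 by simp
  next
    case False
    have "(\<lambda>N. \<Sum>a\<in>F. real (occ (w@[a]) (prefix_of \<alpha> N)) / real N) \<longlonglongrightarrow> (\<Sum>a\<in>F. \<mu> (w @ [a]))"
      by (intro tendsto_sum lim) simp
    note L1 = this
    have L2: "(\<Sum>a\<in>F. real (occ (w@[a]) (prefix_of \<alpha> N)) / real N)
        \<le> real (occ w (prefix_of \<alpha> N)) / real N" for N
    proof -
      have "(\<Sum>a\<in>F. real (occ (w@[a]) (prefix_of \<alpha> N))) \<le> real (occ w (prefix_of \<alpha> N))"
        using occ_snoc_le[OF that, of w "prefix_of \<alpha> N"] by (simp flip: of_nat_sum)
      thus ?thesis by (simp add: sum_divide_distrib[symmetric] divide_right_mono)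
    qed
    show ?thesis by (rule LIMSEQ_le[OF L1 lim[OF False]]) (use L2 in auto)
  qed
  have bd_cons: "(\<Sum>a\<in>F. \<mu> (a # w)) \<le> \<mu> w" if "finite F" for w F
  proof (cases "w = []")
    case True thus ?thesis using single[OF that] mu0 by simp
  next
    case False
    have "(\<lambda>N. \<Sum>a\<in>F. real (occ (a#w) (prefix_of \<alpha> N)) / real N) \<longlonglongrightarrow> (\<Sum>a\<in>F. \<mu> (a # w))"
      by (intro tendsto_sum lim) simp
    note L1 = this
    have L2: "(\<Sum>a\<in>F. real (occ (a#w) (prefix_of \<alpha> N)) / real N)
        \<le> real (occ w (prefix_of \<alpha> N)) / real N" for N
    proof -
      have "(\<Sum>a\<in>F. real (occ (a#w) (prefix_of \<alpha> N))) \<le> real (occ w (prefix_of \<alpha> N))"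
        using occ_cons_le[OF that, of w "prefix_of \<alpha> N"] by (simp flip: of_nat_sum)
      thus ?thesis by (simp add: sum_divide_distrib[symmetric] divide_right_mono)
    qed
    show ?thesis by (rule LIMSEQ_le[OF L1 lim[OF False]]) (use L2 in auto)
  qed
  define n where "n = length w0"
  have p1: "((\<lambda>(x,a). \<mu> (x @ [a])) has_sum 1) ({w. length w = n} \<times> UNIV)"
  proof -
    have "((\<lambda>x. \<mu> ((\<lambda>(w,a). w @ [a]) x)) has_sum 1) ({w. length w = n} \<times> UNIV)"
      using has_sum_reindex_bij_betw[OF bij_snoc[of n], where f=\<mu> and S=1] hsn[of "Suc n"] by simp
    thus ?thesis by (simp add: case_prod_unfold)
  qed
  have p2: "((\<lambda>(x,a). \<mu> (a # x)) has_sum 1) ({w. length w = n} \<times> UNIV)"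
  proof -
    have "((\<lambda>x. \<mu> ((\<lambda>(w,a). a # w) x)) has_sum 1) ({w. length w = n} \<times> UNIV)"
      using has_sum_reindex_bij_betw[OF bij_cons[of n], where f=\<mu> and S=1] hsn[of "Suc n"] by simp
    thus ?thesis by (simp add: case_prod_unfold)
  qed
  have "((\<lambda>a. \<mu> (w0 @ [a])) has_sum \<mu> w0) UNIV"
    using global_eq[of \<mu> "{w. length w = n}" "\<lambda>x a. \<mu> (x @ [a])", OF hsn p1 _ bd_snoc] nn
    by (simp add: n_def)
  moreover have "((\<lambda>a. \<mu> (a # w0)) has_sum \<mu> w0) UNIV"
    using global_eq[of \<mu> "{w. length w = n}" "\<lambda>x a. \<mu> (a # x)", OF hsn p2 _ bd_cons] nn
    by (simp add: n_def)
  ultimately show "((\<lambda>a. \<mu> (w0 @ [a])) has_sum \<mu> w0) UNIV \<and> ((\<lambda>a. \<mu> (a # w0)) has_sum \<mu> w0) UNIV" ..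
qed

end
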